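(* Let $H$ be a finite-dimensional real Hilbert space, $A\in B(H,H)$ symmetric with $\|A^{1/2}\mathbf{u}\|^2\ge\ell_0\|\mathbf{u}\|^2$ for all $\mathbf{u}$ ($\ell_0>0$), $\mathbf{N}:H\to H$ locally Lipschitz with $\mathbf{N}(\mathbf{u})\cdot\mathbf{u}=0$ for all $\mathbf{u}$, $\mathbf{F}\in H$ constant, and $\gamma>0$. For $k\in(0,1]$ let $\mathbb{S}_k$ be the map on $(H\times H)\times\mathbb{R}^2$ given by $\mathbb{S}_k((\mathbf{u}_0,\mathbf{u}_1),(q_0,q_1))=((\mathbf{u}_1,\mathbf{u}_2),(q_1,q_2))$, where $(\mathbf{u}_2,q_2)$ is the unique solution of $$\frac{3\mathbf{u}_2-4\mathbf{u}_1+\mathbf{u}_0}{2k}+A\mathbf{u}_2+q_2\mathbf{N}(2\mathbf{u}_1-\mathbf{u}_0)=\mathbf{F},\qquad \frac{3q_2-4q_1+q_0}{2k}+\gamma q_2-\mathbf{N}(2\mathbf{u}_1-\mathbf{u}_0)\cdot\mathbf{u}_2=\gamma,$$ and let $\mathscr{A}_k$ be the global attractor of the discrete dynamical system generated by $\mathbb{S}_k$. Then there exists a constant $C>0$ independent of $k$ such that $$\|\mathbf{u}_1-\mathbf{u}_2\|+|q_1-q_2|\le Ck\qquad\text{for all }((\mathbf{u}_1,\mathbf{u}_2),(q_1,q_2))\in\mathscr{A}_k\text{ and all }k.$$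
   Context: A global attractor of a discrete dynamical system is a compact invariant set attracting all bounded sets; $\mathbb{S}_k$ possesses one under the stated assumptions. *)

theory Defs
  imports "HOL-Analysis.Analysis"
begin

definition symmetric_op :: "('a::real_inner \<Rightarrow> 'a) \<Rightarrow> bool" where
  "symmetric_op A \<longleftrightarrow> (\<forall>u v. inner (A u) v = inner u (A v))"

definition is_pos_sqrt :: "('a::real_inner \<Rightarrow> 'a) \<Rightarrow> ('a \<Rightarrow> 'a) \<Rightarrow> bool" where
  "is_pos_sqrt B A \<longleftrightarrow> bounded_linear B \<and> symmetric_op B \<and> (\<forall>u. inner u (B u) \<ge> 0) \<and> B \<circ> B = A"

definition locally_lipschitz :: "('a::metric_space \<Rightarrow> 'b::metric_space) \<Rightarrow> bool" where
  "locally_lipschitz N \<longleftrightarrow>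
     (\<forall>x. \<exists>r>0. \<exists>L. \<forall>y\<in>ball x r. \<forall>z\<in>ball x r. dist (N y) (N z) \<le> L * dist y z)"

definition S_step ::
  "real \<Rightarrow> ('a::real_inner \<Rightarrow> 'a) \<Rightarrow> ('a \<Rightarrow> 'a) \<Rightarrow> 'a \<Rightarrow> real \<Rightarrow>
   ('a \<times> 'a) \<times> (real \<times> real) \<Rightarrow> ('a \<times> 'a) \<times> (real \<times> real)" where
  "S_step k A N F \<gamma> st =
    (case st of ((u0, u1), (q0, q1)) \<Rightarrow>
      (let (u2, q2) = (THE (u2, q2).
             (1 / (2 * k)) *\<^sub>R (3 *\<^sub>R u2 - 4 *\<^sub>R u1 + u0) + A u2
               + q2 *\<^sub>R N (2 *\<^sub>R u1 - u0) = F
           \<and> (3 * q2 - 4 * q1 + q0) / (2 * k) + \<gamma> * q2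
               - inner (N (2 *\<^sub>R u1 - u0)) u2 = \<gamma>)
       in ((u1, u2), (q1, q2))))"

definition global_attractor :: "('a::metric_space \<Rightarrow> 'a) \<Rightarrow> 'a set \<Rightarrow> bool" where
  "global_attractor S Att \<longleftrightarrow>
     Att \<noteq> {} \<and> compact Att \<and> S ` Att = Att \<and>
     (\<forall>B. bounded B \<longrightarrow>
        (\<forall>e>0. \<exists>n0. \<forall>n\<ge>n0. \<forall>x\<in>B. infdist ((S ^^ n) x) Att < e))"

end

theory Submission
  imports Defs
begin


lemma step_solves:
  fixes A N :: "'a::euclidean_space \<Rightarrow> 'a" and F :: 'a
  assumes k: "k > 0" and A: "bounded_linear A" and Apos: "\<forall>u. inner u (A u) \<ge> 0"
    and g: "\<gamma> > 0"
  shows "\<exists>u2 q2. S_step k A N F \<gamma> ((u0, u1), (q0, q1)) = ((u1, u2), (q1, q2)) \<and>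
     (1 / (2 * k)) *\<^sub>R (3 *\<^sub>R u2 - 4 *\<^sub>R u1 + u0) + A u2 + q2 *\<^sub>R N (2 *\<^sub>R u1 - u0) = F
   \<and> (3 * q2 - 4 * q1 + q0) / (2 * k) + \<gamma> * q2 - inner (N (2 *\<^sub>R u1 - u0)) u2 = \<gamma>"
proof -
  define w where "w = N (2 *\<^sub>R u1 - u0)"
  define P where "P = (\<lambda>(u2::'a, q2::real).
     (1 / (2 * k)) *\<^sub>R (3 *\<^sub>R u2 - 4 *\<^sub>R u1 + u0) + A u2 + q2 *\<^sub>R w = F
   \<and> (3 * q2 - 4 * q1 + q0) / (2 * k) + \<gamma> * q2 - inner w u2 = \<gamma>)"
  define L where "L = (\<lambda>(u::'a, q::real). ((3 / (2*k)) *\<^sub>R u + A u + q *\<^sub>R w, (3/(2*k) + \<gamma>) * q - inner w u))"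
  define rhs where "rhs = (F + (1/(2*k)) *\<^sub>R (4 *\<^sub>R u1 - u0), \<gamma> + (4 * q1 - q0) / (2*k))"
  have AL: "linear A" using A bounded_linear.linear by blast
  have lin: "linear L"
  proof (rule linearI)
    fix x y :: "'a \<times> real"
    show "L (x + y) = L x + L y"
      by (cases x; cases y) (simp add: L_def linear_add[OF AL] algebra_simps add_divide_distrib)
  next
    fix c :: real and x :: "'a \<times> real"
    show "L (c *\<^sub>R x) = c *\<^sub>R L x"
      by (cases x) (simp add: L_def linear_scale[OF AL] algebra_simps inner_scaleR_right)
  qed
  have ker: "x = 0" if "L x = 0" for x
  proof (cases x)
    case (Pair u q)
    have e1: "(3 / (2*k)) *\<^sub>R u + A u + q *\<^sub>R w = 0" and e2: "(3/(2*k) + \<gamma>) * q - inner w u = 0"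
      using that Pair by (auto simp: L_def zero_prod_def)
    have "inner u ((3 / (2*k)) *\<^sub>R u + A u + q *\<^sub>R w) = 0" using e1 by simp
    hence i1: "(3/(2*k)) * inner u u + inner u (A u) + q * inner u w = 0"
      by (simp add: inner_add_right)
    have i2: "(3/(2*k) + \<gamma>) * q * q - q * inner w u = 0" using e2 by (simp add: algebra_simps)
    have s: "(3/(2*k)) * inner u u + inner u (A u) + (3/(2*k) + \<gamma>) * q * q = 0"
      using i1 i2 by (simp add: inner_commute algebra_simps)
    have p1: "(3/(2*k)) * inner u u \<ge> 0" using k by simp
    have p2: "inner u (A u) \<ge> 0" using Apos by blast
    have p3: "(3/(2*k) + \<gamma>) * q * q \<ge> 0" using k g by (simp add: mult.assoc)
    have "(3/(2*k)) * inner u u = 0" using s p1 p2 p3 by linarith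
    hence "u = 0" using k by simp
    moreover have "(3/(2*k) + \<gamma>) * q * q = 0" using s p1 p2 p3 by linarith
    hence "q = 0" using k g by (smt (verit) divide_pos_pos mult_eq_0_iff)
    ultimately show ?thesis using Pair by (simp add: zero_prod_def)
  qed
  have inj: "inj L"
  proof (rule injI)
    fix x y assume "L x = L y"
    hence "L (x - y) = 0" by (simp add: linear_diff[OF lin])
    hence "x - y = 0" using ker by blast
    thus "x = y" by simp
  qed
  have surj: "surj L" using lin inj linear_inj_imp_surj by blast
  have PL: "P p \<longleftrightarrow> L p = rhs" for p
  proof (cases p)
    case (Pair u q)
    have a: "(1 / (2 * k)) *\<^sub>R (3 *\<^sub>R u - 4 *\<^sub>R u1 + u0) = (3 / (2*k)) *\<^sub>R u - (1/(2*k)) *\<^sub>R (4 *\<^sub>R u1 - u0)"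
      by (simp add: algebra_simps)
    have b: "(3 * q - 4 * q1 + q0) / (2 * k) = 3/(2*k) * q - (4 * q1 - q0) / (2*k)"
      using k by (simp add: field_simps)
    have c: "((3 * q - 4 * q1 + q0) / (2 * k) + \<gamma> * q - inner w u = \<gamma>) \<longleftrightarrow>
      ((3/(2*k) + \<gamma>) * q - inner w u = \<gamma> + (4 * q1 - q0) / (2*k))"
      unfolding b by (simp add: distrib_right) linarith
    have d: "((3 / (2*k)) *\<^sub>R u - (1/(2*k)) *\<^sub>R (4 *\<^sub>R u1 - u0) + A u + q *\<^sub>R w = F) \<longleftrightarrow>
      ((3 / (2*k)) *\<^sub>R u + A u + q *\<^sub>R w = F + (1/(2*k)) *\<^sub>R (4 *\<^sub>R u1 - u0))"
      by (auto simp: algebra_simps)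
    show ?thesis unfolding Pair P_def L_def rhs_def
      by (simp only: prod.case prod.inject a c d)
  qed
  obtain p where p: "L p = rhs" using surj by (metis surjD)
  have ex1: "\<exists>!p. P p" using p PL inj by (metis injD)
  have Pp: "P (THE p. P p)" using ex1 by (rule theI')
  obtain u2 q2 where uq: "(THE p. P p) = (u2, q2)" by (cases "THE p. P p")
  have "S_step k A N F \<gamma> ((u0, u1), (q0, q1)) = ((u1, u2), (q1, q2))"
    unfolding S_step_def using uq by (simp add: P_def w_def)
  thus ?thesis using Pp uq by (auto simp: P_def w_def)
qed


lemma bdf_id:
  fixes a b c :: "'a::real_inner"
  shows "2 * inner (3 *\<^sub>R a - 4 *\<^sub>R b + c) a = norm a ^ 2 + norm (2 *\<^sub>R a - b) ^ 2 - norm b ^ 2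
     - norm (2 *\<^sub>R b - c) ^ 2 + norm (a - 2 *\<^sub>R b + c) ^ 2"
  by (simp add: power2_norm_eq_inner inner_diff_left inner_diff_right inner_add_left inner_add_right
      inner_commute algebra_simps)

lemma energy:
  fixes A N :: "'a::euclidean_space \<Rightarrow> 'a" and F ua ub uc :: 'a
  assumes k: "k > 0" and l0: "l0 > 0" and g: "\<gamma> > 0"
    and Apos: "\<forall>u. inner u (A u) \<ge> l0 * norm u ^ 2"
    and e1: "(1 / (2 * k)) *\<^sub>R (3 *\<^sub>R uc - 4 *\<^sub>R ub + ua) + A uc + qc *\<^sub>R N (2 *\<^sub>R ub - ua) = F"
    and e2: "(3 * qc - 4 * qb + qa) / (2 * k) + \<gamma> * qc - inner (N (2 *\<^sub>R ub - ua)) uc = \<gamma>"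
  shows "norm uc ^ 2 + norm (2 *\<^sub>R uc - ub) ^ 2 + qc ^ 2 + (2 * qc - qb) ^ 2
           + 4 * k * ((l0 / 2) * norm uc ^ 2 + (\<gamma> / 2) * qc ^ 2)
       \<le> norm ub ^ 2 + norm (2 *\<^sub>R ub - ua) ^ 2 + qb ^ 2 + (2 * qb - qa) ^ 2
           + 4 * k * (norm F ^ 2 / (2 * l0) + \<gamma> / 2)"
proof -
  define w where "w = N (2 *\<^sub>R ub - ua)"
  define X where "X = inner (3 *\<^sub>R uc - 4 *\<^sub>R ub + ua) uc"
  define Y where "Y = (3 * qc - 4 * qb + qa) * qc"
  have i1: "X / (2 * k) + inner (A uc) uc + qc * inner w uc = inner F uc"
  proof -
    have "inner ((1 / (2 * k)) *\<^sub>R (3 *\<^sub>R uc - 4 *\<^sub>R ub + ua) + A uc + qc *\<^sub>R w) uc = inner F uc"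
      using e1 by (simp add: w_def)
    thus ?thesis by (simp add: inner_add_left X_def)
  qed
  have i2: "Y / (2 * k) + \<gamma> * qc * qc - qc * inner w uc = \<gamma> * qc"
  proof -
    have "((3 * qc - 4 * qb + qa) / (2 * k) + \<gamma> * qc - inner w uc) * qc = \<gamma> * qc"
      using e2 by (simp add: w_def)
    thus ?thesis by (simp add: Y_def algebra_simps)
  qed
  have sum: "(X + Y) / (2 * k) + inner (A uc) uc + \<gamma> * qc ^ 2 = inner F uc + \<gamma> * qc"
    using i1 i2 by (simp add: add_divide_distrib power2_eq_square algebra_simps)
  hence sum2: "2 * X + 2 * Y + 4 * k * (inner (A uc) uc + \<gamma> * qc ^ 2) = 4 * k * (inner F uc + \<gamma> * qc)"
    using k by (simp add: field_simps)
  have Xid: "2 * X = norm uc ^ 2 + norm (2 *\<^sub>R uc - ub) ^ 2 - norm ub ^ 2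
     - norm (2 *\<^sub>R ub - ua) ^ 2 + norm (uc - 2 *\<^sub>R ub + ua) ^ 2"
    unfolding X_def by (rule bdf_id)
  have Yid: "2 * Y = qc ^ 2 + (2 * qc - qb) ^ 2 - qb ^ 2 - (2 * qb - qa) ^ 2 + (qc - 2 * qb + qa) ^ 2"
    unfolding Y_def by (simp add: power2_eq_square algebra_simps)
  have Ain: "inner (A uc) uc \<ge> l0 * norm uc ^ 2" using Apos by (simp add: inner_commute)
  have Fb: "inner F uc \<le> (l0 / 2) * norm uc ^ 2 + norm F ^ 2 / (2 * l0)"
  proof -
    have "inner F uc \<le> norm F * norm uc" by (rule norm_cauchy_schwarz)
    moreover have "norm F * norm uc \<le> (l0 / 2) * norm uc ^ 2 + norm F ^ 2 / (2 * l0)"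
    proof -
      have "0 \<le> (l0 * norm uc - norm F) ^ 2" by simp
      hence "2 * l0 * (norm F * norm uc) \<le> l0 ^ 2 * norm uc ^ 2 + norm F ^ 2"
        by (simp add: power2_eq_square algebra_simps)
      thus ?thesis using l0 by (simp add: field_simps power2_eq_square)
    qed
    ultimately show ?thesis by linarith
  qed
  have qb: "\<gamma> * qc \<le> (\<gamma> / 2) * qc ^ 2 + \<gamma> / 2"
  proof -
    have "0 \<le> \<gamma> * (qc - 1) ^ 2" using g by simp
    thus ?thesis by (simp add: power2_eq_square algebra_simps)
  qed
  have nn1: "norm (uc - 2 *\<^sub>R ub + ua) ^ 2 \<ge> 0" by simp
  have nn2: "(qc - 2 * qb + qa) ^ 2 \<ge> 0" by simp
  define T where "T = 4 * k * ((l0 / 2) * norm uc ^ 2 + (\<gamma> / 2) * qc ^ 2)"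
  define R where "R = 4 * k * (norm F ^ 2 / (2 * l0) + \<gamma> / 2)"
  have "4 * k * (inner (A uc) uc + \<gamma> * qc ^ 2) \<ge> 4 * k * (l0 * norm uc ^ 2 + \<gamma> * qc ^ 2)"
    using Ain k by simp
  also have "4 * k * (l0 * norm uc ^ 2 + \<gamma> * qc ^ 2) = 2 * T" unfolding T_def by (simp add: algebra_simps)
  finally have m1: "4 * k * (inner (A uc) uc + \<gamma> * qc ^ 2) \<ge> 2 * T" .
  have "4 * k * (inner F uc + \<gamma> * qc) \<le> 4 * k * ((l0 / 2) * norm uc ^ 2 + norm F ^ 2 / (2 * l0) + (\<gamma> / 2) * qc ^ 2 + \<gamma> / 2)"
    using Fb qb k by (intro mult_left_mono) auto
  also have "\<dots> = T + R" unfolding T_def R_def by (simp add: algebra_simps)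
  finally have m2: "4 * k * (inner F uc + \<gamma> * qc) \<le> T + R" .
  have "norm uc ^ 2 + norm (2 *\<^sub>R uc - ub) ^ 2 + qc ^ 2 + (2 * qc - qb) ^ 2 + T
       \<le> norm ub ^ 2 + norm (2 *\<^sub>R ub - ua) ^ 2 + qb ^ 2 + (2 * qb - qa) ^ 2 + R"
    using m1 m2 sum2 Xid Yid nn1 nn2 by linarith
  thus ?thesis unfolding T_def R_def .
qed


lemma ll_cont:
  fixes N :: "'a::metric_space \<Rightarrow> 'b::metric_space"
  assumes "locally_lipschitz N" shows "continuous_on UNIV N"
proof -
  have "isCont N x" for x
  proof -
    obtain r L where r: "r > 0" and L: "\<forall>y\<in>ball x r. \<forall>z\<in>ball x r. dist (N y) (N z) \<le> L * dist y z"
      using assms unfolding locally_lipschitz_def by blast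
    show ?thesis unfolding continuous_at_eps_delta
    proof (intro allI impI)
      fix e :: real assume e: "e > 0"
      define d where "d = min r (e / (\<bar>L\<bar> + 1))"
      have d: "d > 0" using r e by (simp add: d_def)
      have "dist (N x') (N x) < e" if "dist x' x < d" for x'
      proof -
        have x': "x' \<in> ball x r" using that by (simp add: d_def dist_commute)
        have "dist (N x') (N x) \<le> L * dist x' x" using L x' r by simp
        also have "\<dots> \<le> \<bar>L\<bar> * dist x' x" by (simp add: mult_right_mono)
        also have "\<dots> \<le> \<bar>L\<bar> * (e / (\<bar>L\<bar> + 1))"
          using that by (intro mult_left_mono) (auto simp: d_def)
        also have "\<dots> < e" using e by (simp add: field_simps)
        finally show ?thesis .
      qed
      thus "\<exists>d>0. \<forall>x'. dist x' x < d \<longrightarrow> dist (N x') (N x) < e" using d by blast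
    qed
  qed
  thus ?thesis by (simp add: continuous_at_imp_continuous_on)
qed

lemma sup_arg:
  fixes f :: "'s \<Rightarrow> real"
  assumes inv: "S ` Att = Att" and ne: "Att \<noteq> {}" and bdd: "bdd_above (f ` Att)"
    and step: "\<forall>y\<in>Att. f (S y) * \<alpha> \<le> f y + \<beta>" and al: "\<alpha> > 1"
  shows "\<forall>x\<in>Att. f x \<le> \<beta> / (\<alpha> - 1)"
proof -
  define M where "M = Sup (f ` Att)"
  have up: "f x \<le> M" if "x \<in> Att" for x unfolding M_def using bdd that by (intro cSup_upper) auto
  have "f x \<le> (M + \<beta>) / \<alpha>" if "x \<in> Att" for x
  proof -
    have "x \<in> S ` Att" using inv that by simp
    then obtain y where y: "y \<in> Att" "x = S y" by (rule imageE) auto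
    have "f (S y) * \<alpha> \<le> f y + \<beta>" using step y(1) by blast
    hence "f x * \<alpha> \<le> M + \<beta>" using y(2) up[OF y(1)] by simp
    thus ?thesis using al by (simp add: field_simps)
  qed
  hence "M \<le> (M + \<beta>) / \<alpha>" unfolding M_def using ne by (intro cSup_least) auto
  hence "M * \<alpha> \<le> M + \<beta>" using al by (simp add: field_simps)
  hence "M \<le> \<beta> / (\<alpha> - 1)" using al by (simp add: field_simps)
  thus ?thesis using up by (meson order_trans)
qed

lemma arith_G:
  fixes c k a a' E E' K :: real
  assumes c: "c > 0" and k: "k > 0" "k \<le> 1" and a: "a \<ge> 0" "a' \<ge> 0"
    and h1: "E' + 4 * k * c * a' \<le> E + 4 * k * K" and h2: "E' \<le> 9 * a' + 2 * a"
  shows "(E' + 2 * c * k * a') * (1 + c / (9 + 2 * c) * k) \<le> E + 2 * c * k * a + 4 * K * k"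
proof -
  define e where "e = c / (9 + 2 * c)"
  have e: "e > 0" "e * (9 + 2 * c) = c" "e \<le> c" using c by (auto simp: e_def field_simps)
  have x0: "(E' + 2 * c * k * a') * (1 + e * k) = E' + 2 * c * k * a' + (e * k) * E' + 2 * c * e * k * (k * a')"
    by (simp add: algebra_simps)
  have x1: "(e * k) * E' \<le> (e * k) * (9 * a' + 2 * a)" using h2 e k by (intro mult_left_mono) auto
  have x2: "2 * c * e * k * (k * a') \<le> 2 * c * e * k * a'"
  proof -
    have "k * a' \<le> a'" using k a by (simp add: mult_left_le_one_le)
    thus ?thesis using c e k by (intro mult_left_mono) auto
  qed
  have x3: "(e * k) * (9 * a' + 2 * a) + 2 * c * e * k * a' = k * a' * (e * (9 + 2 * c)) + 2 * e * k * a"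
    by (simp add: algebra_simps)
  have x4: "k * a' * (e * (9 + 2 * c)) = c * k * a'" using e by simp
  have x5: "2 * e * k * a \<le> 2 * c * k * a" using e k a by (intro mult_right_mono) auto
  have x6: "4 * k * c * a' = 4 * (c * k * a')" "2 * c * k * a' = 2 * (c * k * a')" by simp_all
  have "(E' + 2 * c * k * a') * (1 + e * k) \<le> E + 2 * c * k * a + 4 * K * k"
  proof -
    have x7: "4 * K * k = 4 * k * K" by simp
    have x8: "c * k * a' \<ge> 0" using c k a by simp
    show ?thesis using x0 x1 x2 x3 x4 x5 x6 x7 x8 h1 by linarith
  qed
  thus ?thesis unfolding e_def .
qed


theorem proposition4:
  fixes A B N :: "'a::euclidean_space \<Rightarrow> 'a" and F :: 'a and l0 \<gamma> :: real
  assumes "bounded_linear A" and "symmetric_op A"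
    and "is_pos_sqrt B A"
    and "l0 > 0" and "\<forall>u. (norm (B u))\<^sup>2 \<ge> l0 * (norm u)\<^sup>2"
    and "locally_lipschitz N" and "\<forall>u. inner (N u) u = 0"
    and "\<gamma> > 0"
  shows "\<exists>C>0. \<forall>k\<in>{0<..1}. \<forall>Att. global_attractor (S_step k A N F \<gamma>) Att \<longrightarrow>
           (\<forall>u1 u2 q1 q2. ((u1, u2), (q1, q2)) \<in> Att \<longrightarrow>
              norm (u1 - u2) + \<bar>q1 - q2\<bar> \<le> C * k)"
proof -
  note Ab = assms(1) and l0 = assms(4) and g = assms(8)
  have Apos: "\<forall>u. inner u (A u) \<ge> l0 * norm u ^ 2"
  proof
    fix u
    have Bs: "symmetric_op B" and BA: "B \<circ> B = A" using assms(3) unfolding is_pos_sqrt_def by auto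
    have "inner u (A u) = inner u (B (B u))" using BA by (metis comp_apply)
    also have "\<dots> = inner (B u) (B u)" using Bs unfolding symmetric_op_def by metis
    also have "\<dots> = norm (B u) ^ 2" by (simp add: power2_norm_eq_inner)
    finally show "inner u (A u) \<ge> l0 * norm u ^ 2" using assms(5) by simp
  qed
  have Apos0: "\<forall>u. inner u (A u) \<ge> 0"
  proof
    fix u show "inner u (A u) \<ge> 0" using Apos[rule_format, of u] l0
      by (smt (verit) zero_le_power2 mult_nonneg_nonneg)
  qed
  obtain KA where KA: "KA > 0" "\<forall>x. norm (A x) \<le> norm x * KA"
    using bounded_linear.pos_bounded[OF Ab] by blast
  have Ncont: "continuous_on UNIV N" using ll_cont assms(6) by blast
  define c where "c = min l0 \<gamma> / 2"
  define K where "K = norm F ^ 2 / (2 * l0) + \<gamma> / 2"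
  define \<epsilon> where "\<epsilon> = c / (9 + 2 * c)"
  define R where "R = sqrt (4 * K / \<epsilon>)"
  have c: "c > 0" "c \<le> l0 / 2" "c \<le> \<gamma> / 2" using l0 g by (auto simp: c_def)
  have K: "K > 0" using l0 g by (simp add: K_def add_nonneg_pos)
  have eps: "\<epsilon> > 0" using c by (simp add: \<epsilon>_def)
  have R: "R \<ge> 0" "R ^ 2 = 4 * K / \<epsilon>" using K eps by (auto simp: R_def)
  obtain NB where NB: "NB > 0" "\<forall>w. norm w \<le> 3 * R \<longrightarrow> norm (N w) \<le> NB"
  proof -
    have "compact (N ` cball 0 (3 * R))"
      by (rule compact_continuous_image) (auto intro: continuous_on_subset[OF Ncont])
    hence "bounded (N ` cball 0 (3 * R))" by (rule compact_imp_bounded)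
    then obtain b where "b > 0" "\<forall>x\<in>N ` cball 0 (3 * R). norm x \<le> b" by (auto simp: bounded_pos)
    thus ?thesis using that by auto
  qed
  define C1 where "C1 = (2/3) * (norm F + KA * R + R * NB) + (2/3) * (\<gamma> + \<gamma> * R + NB * R)"
  define C where "C = 3 / 2 * C1 + 1"
  have C1: "C1 \<ge> 0" using R KA NB g by (simp add: C1_def)
  have C: "C > 0" using C1 by (simp add: C_def)
  show ?thesis
  proof (intro exI[of _ C] conjI ballI allI impI)
    show "C > 0" by (rule C)
  next
    fix k Att u1 u2 q1 q2
    assume kin: "k \<in> {0<..(1::real)}" and att: "global_attractor (S_step k A N F \<gamma>) Att"
      and x: "((u1, u2), (q1, q2)) \<in> Att"
    define S where "S = S_step k A N F \<gamma>"
    have k: "k > 0" "k \<le> 1" using kin by auto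
    have inv: "S ` Att = Att" and ne: "Att \<noteq> {}" and cpt: "compact Att"
      using att unfolding global_attractor_def S_def by auto
    have stp: "\<exists>u2 q2. S ((u0, u1), (q0, q1)) = ((u1, u2), (q1, q2)) \<and>
     (1 / (2 * k)) *\<^sub>R (3 *\<^sub>R u2 - 4 *\<^sub>R u1 + u0) + A u2 + q2 *\<^sub>R N (2 *\<^sub>R u1 - u0) = F
   \<and> (3 * q2 - 4 * q1 + q0) / (2 * k) + \<gamma> * q2 - inner (N (2 *\<^sub>R u1 - u0)) u2 = \<gamma>" for u0 u1 q0 q1
      unfolding S_def using step_solves[OF k(1) Ab Apos0 g] by blast
    have pre: "\<exists>y\<in>Att. x = S y" if "x \<in> Att" for x
    proof -
      have "x \<in> S ` Att" using inv that by simp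
      thus ?thesis by blast
    qed
    have Sfst: "fst (fst (S y)) = snd (fst y) \<and> fst (snd (S y)) = snd (snd y)" for y
    proof -
      obtain u0 u1 q0 q1 where y: "y = ((u0, u1), (q0, q1))" by (metis prod.collapse)
      show ?thesis using stp[of u0 u1 q0 q1] y by auto
    qed
    define G where "G = (\<lambda>x::('a \<times> 'a) \<times> (real \<times> real).
       norm (snd (fst x)) ^ 2 + norm (2 *\<^sub>R snd (fst x) - fst (fst x)) ^ 2 + snd (snd x) ^ 2
       + (2 * snd (snd x) - fst (snd x)) ^ 2 + 2 * c * k * (norm (snd (fst x)) ^ 2 + snd (snd x) ^ 2))"
    have Gstep: "\<forall>y\<in>Att. G (S y) * (1 + c / (9 + 2 * c) * k) \<le> G y + 4 * K * k"
    proof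
      fix y assume "y \<in> Att"
      obtain u0 u1 q0 q1 where y: "y = ((u0, u1), (q0, q1))" by (metis prod.collapse)
      obtain u2 q2 where Sy: "S y = ((u1, u2), (q1, q2))"
        and e1: "(1 / (2 * k)) *\<^sub>R (3 *\<^sub>R u2 - 4 *\<^sub>R u1 + u0) + A u2 + q2 *\<^sub>R N (2 *\<^sub>R u1 - u0) = F"
        and e2: "(3 * q2 - 4 * q1 + q0) / (2 * k) + \<gamma> * q2 - inner (N (2 *\<^sub>R u1 - u0)) u2 = \<gamma>"
        using stp[of u0 u1 q0 q1] y by blast
      have en: "norm u2 ^ 2 + norm (2 *\<^sub>R u2 - u1) ^ 2 + q2 ^ 2 + (2 * q2 - q1) ^ 2
           + 4 * k * ((l0 / 2) * norm u2 ^ 2 + (\<gamma> / 2) * q2 ^ 2)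
       \<le> norm u1 ^ 2 + norm (2 *\<^sub>R u1 - u0) ^ 2 + q1 ^ 2 + (2 * q1 - q0) ^ 2
           + 4 * k * (norm F ^ 2 / (2 * l0) + \<gamma> / 2)"
        by (rule energy[where N=N and A=A and F=F and ua=u0 and ub=u1 and uc=u2 and qa=q0 and qb=q1 and qc=q2, OF k(1) l0 g Apos e1 e2])
      have h0: "4 * k * c * (norm u2 ^ 2 + q2 ^ 2) \<le> 4 * k * ((l0 / 2) * norm u2 ^ 2 + (\<gamma> / 2) * q2 ^ 2)"
      proof -
        have "c * norm u2 ^ 2 \<le> (l0 / 2) * norm u2 ^ 2" using c by (intro mult_right_mono) auto
        moreover have "c * q2 ^ 2 \<le> (\<gamma> / 2) * q2 ^ 2" using c by (intro mult_right_mono) auto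
        ultimately have "c * (norm u2 ^ 2 + q2 ^ 2) \<le> (l0 / 2) * norm u2 ^ 2 + (\<gamma> / 2) * q2 ^ 2"
          by (simp add: distrib_left)
        hence "4 * k * (c * (norm u2 ^ 2 + q2 ^ 2)) \<le> 4 * k * ((l0 / 2) * norm u2 ^ 2 + (\<gamma> / 2) * q2 ^ 2)"
          using k by (intro mult_left_mono) auto
        thus ?thesis by (simp add: mult.assoc)
      qed
      have h1: "norm u2 ^ 2 + norm (2 *\<^sub>R u2 - u1) ^ 2 + q2 ^ 2 + (2 * q2 - q1) ^ 2
           + 4 * k * c * (norm u2 ^ 2 + q2 ^ 2)
         \<le> norm u1 ^ 2 + norm (2 *\<^sub>R u1 - u0) ^ 2 + q1 ^ 2 + (2 * q1 - q0) ^ 2 + 4 * k * K"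
        using en h0 unfolding K_def by linarith
      have sq: "(2 * a + b) ^ 2 \<le> 8 * a ^ 2 + 2 * b ^ 2" for a b :: real
      proof -
        have "0 \<le> (2 * a - b) ^ 2" by simp
        thus ?thesis by (simp add: power2_eq_square algebra_simps)
      qed
      have n2: "norm (2 *\<^sub>R u2 - u1) ^ 2 \<le> 8 * norm u2 ^ 2 + 2 * norm u1 ^ 2"
      proof -
        have "norm (2 *\<^sub>R u2 - u1) \<le> 2 * norm u2 + norm u1"
          using norm_triangle_ineq4[of "2 *\<^sub>R u2" u1] by simp
        hence "norm (2 *\<^sub>R u2 - u1) ^ 2 \<le> (2 * norm u2 + norm u1) ^ 2"
          by (intro power_mono) auto
        thus ?thesis using sq[of "norm u2" "norm u1"] by linarith
      qed
      have q2b: "(2 * q2 - q1) ^ 2 \<le> 8 * q2 ^ 2 + 2 * q1 ^ 2"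
      proof -
        have "0 \<le> (2 * q2 + q1) ^ 2" by simp
        thus ?thesis by (simp add: power2_eq_square algebra_simps)
      qed
      have h2: "norm u2 ^ 2 + norm (2 *\<^sub>R u2 - u1) ^ 2 + q2 ^ 2 + (2 * q2 - q1) ^ 2
          \<le> 9 * (norm u2 ^ 2 + q2 ^ 2) + 2 * (norm u1 ^ 2 + q1 ^ 2)"
      proof -
        have l: "(X::real) \<le> 8 * (a::real) + 2 * (c::real) \<Longrightarrow> (Y::real) \<le> 8 * (b::real) + 2 * (d::real) \<Longrightarrow>
            a + X + b + Y \<le> 9 * (a + b) + 2 * (c + d)" for a b c d X Y :: real by argo
        show ?thesis by (rule l[OF n2 q2b])
      qed
      have "(norm u2 ^ 2 + norm (2 *\<^sub>R u2 - u1) ^ 2 + q2 ^ 2 + (2 * q2 - q1) ^ 2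
             + 2 * c * k * (norm u2 ^ 2 + q2 ^ 2)) * (1 + c / (9 + 2 * c) * k)
         \<le> norm u1 ^ 2 + norm (2 *\<^sub>R u1 - u0) ^ 2 + q1 ^ 2 + (2 * q1 - q0) ^ 2
             + 2 * c * k * (norm u1 ^ 2 + q1 ^ 2) + 4 * K * k"
        by (rule arith_G[OF c(1) k _ _ h1 h2]) auto
      thus "G (S y) * (1 + c / (9 + 2 * c) * k) \<le> G y + 4 * K * k"
        unfolding G_def Sy by (simp add: y)
    qed
    have bddG: "bdd_above (G ` Att)"
    proof -
      have "continuous_on Att G" unfolding G_def by (intro continuous_intros)
      hence "compact (G ` Att)" using cpt by (rule compact_continuous_image)
      thus ?thesis by (intro bounded_imp_bdd_above compact_imp_bounded)
    qed
    have Gb0: "\<forall>x\<in>Att. G x \<le> 4 * K * k / ((1 + c / (9 + 2 * c) * k) - 1)"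
      by (rule sup_arg[OF inv ne bddG Gstep]) (use c k in simp)
    have Gb: "G x \<le> R ^ 2" if "x \<in> Att" for x
    proof -
      have e1: "(1 + c / (9 + 2 * c) * k) - 1 = \<epsilon> * k" by (simp add: \<epsilon>_def)
      have e2: "4 * K * k / (\<epsilon> * k) = 4 * K / \<epsilon>" using k by simp
      have "4 * K * k / ((1 + c / (9 + 2 * c) * k) - 1) = R ^ 2"
        unfolding e1 e2 R(2) ..
      thus ?thesis using Gb0 that by simp
    qed
    have ab: "norm (snd (fst x)) ^ 2 + snd (snd x) ^ 2 \<le> R ^ 2" if "x \<in> Att" for x
    proof -
      have "0 \<le> 2 * c * k * (norm (snd (fst x)) ^ 2 + snd (snd x) ^ 2)" using c k by simp
      moreover have "0 \<le> norm (2 *\<^sub>R snd (fst x) - fst (fst x)) ^ 2 + (2 * snd (snd x) - fst (snd x)) ^ 2"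
        by simp
      ultimately show ?thesis using Gb[OF that] unfolding G_def by linarith
    qed
    have b2: "norm (snd (fst x)) \<le> R \<and> \<bar>snd (snd x)\<bar> \<le> R" if "x \<in> Att" for x
    proof -
      have z1: "0 \<le> (snd (snd x))^2" and z2: "0 \<le> (norm (snd (fst x)))^2" by simp_all
      have "norm (snd (fst x)) ^ 2 \<le> R ^ 2" using ab[OF that] z1 by linarith
      moreover have "\<bar>snd (snd x)\<bar> ^ 2 \<le> R ^ 2"
      proof -
        have "(snd (snd x)) ^ 2 \<le> R ^ 2" using ab[OF that] z2 by linarith
        thus ?thesis by simp
      qed
      ultimately have "norm (snd (fst x)) ^ 2 \<le> R ^ 2" "\<bar>snd (snd x)\<bar> ^ 2 \<le> R ^ 2" by blast+
      thus ?thesis using R(1) by (auto intro: power2_le_imp_le)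
    qed
    have bnd: "norm (fst (fst x)) \<le> R \<and> \<bar>fst (snd x)\<bar> \<le> R \<and> norm (snd (fst x)) \<le> R \<and> \<bar>snd (snd x)\<bar> \<le> R"
      if xA: "x \<in> Att" for x
    proof -
      obtain y where y: "y \<in> Att" "x = S y" using pre[OF xA] by blast
      show ?thesis using b2[OF y(1)] b2[OF xA] Sfst[of y] y(2) by simp
    qed
    define d where "d = (\<lambda>x::('a \<times> 'a) \<times> (real \<times> real).
       norm (snd (fst x) - fst (fst x)) + \<bar>snd (snd x) - fst (snd x)\<bar>)"
    have dstep: "\<forall>y\<in>Att. d (S y) * 3 \<le> d y + 3 * C1 * k"
    proof
      fix y assume yA: "y \<in> Att"
      obtain u0 u1 q0 q1 where y: "y = ((u0, u1), (q0, q1))" by (metis prod.collapse)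
      obtain u2 q2 where Sy: "S y = ((u1, u2), (q1, q2))"
        and e1: "(1 / (2 * k)) *\<^sub>R (3 *\<^sub>R u2 - 4 *\<^sub>R u1 + u0) + A u2 + q2 *\<^sub>R N (2 *\<^sub>R u1 - u0) = F"
        and e2: "(3 * q2 - 4 * q1 + q0) / (2 * k) + \<gamma> * q2 - inner (N (2 *\<^sub>R u1 - u0)) u2 = \<gamma>"
        using stp[of u0 u1 q0 q1] y by blast
      have SyA: "S y \<in> Att" using inv yA by blast
      have by1: "norm u0 \<le> R" "norm u1 \<le> R" "\<bar>q0\<bar> \<le> R" "\<bar>q1\<bar> \<le> R" using bnd[OF yA] y by auto
      have by2: "norm u2 \<le> R" "\<bar>q2\<bar> \<le> R" using bnd[OF SyA] Sy by auto
      define w where "w = N (2 *\<^sub>R u1 - u0)"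
      have "norm (2 *\<^sub>R u1 - u0) \<le> 2 * norm u1 + norm u0"
        using norm_triangle_ineq4[of "2 *\<^sub>R u1" u0] by simp
      hence "norm (2 *\<^sub>R u1 - u0) \<le> 3 * R" using by1 by linarith
      hence wb: "norm w \<le> NB" using NB unfolding w_def by blast
      have ku: "3 *\<^sub>R u2 - 4 *\<^sub>R u1 + u0 = (2 * k) *\<^sub>R (F - A u2 - q2 *\<^sub>R w)"
      proof -
        have "(1 / (2 * k)) *\<^sub>R (3 *\<^sub>R u2 - 4 *\<^sub>R u1 + u0) = F - A u2 - q2 *\<^sub>R w"
          using e1 unfolding w_def by (simp add: algebra_simps)
        hence "(2 * k) *\<^sub>R ((1 / (2 * k)) *\<^sub>R (3 *\<^sub>R u2 - 4 *\<^sub>R u1 + u0)) = (2 * k) *\<^sub>R (F - A u2 - q2 *\<^sub>R w)"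
          by simp
        thus ?thesis using k by simp
      qed
      have u3: "3 *\<^sub>R (u2 - u1) = (u1 - u0) + (2 * k) *\<^sub>R (F - A u2 - q2 *\<^sub>R w)"
      proof -
        have h4: "(4::real) *\<^sub>R u1 = u1 + 3 *\<^sub>R u1"
        proof -
          have "(4::real) = 1 + 3" by simp
          thus ?thesis by (metis scaleR_add_left scaleR_one)
        qed
        have "3 *\<^sub>R (u2 - u1) = (3 *\<^sub>R u2 - 4 *\<^sub>R u1 + u0) + (u1 - u0)"
          unfolding h4 by (simp add: algebra_simps)
        thus ?thesis unfolding ku by (simp add: algebra_simps)
      qed
      have nF: "norm (F - A u2 - q2 *\<^sub>R w) \<le> norm F + KA * R + R * NB"
      proof -
        have t1: "norm (F - A u2 - q2 *\<^sub>R w) \<le> norm (F - A u2) + norm (q2 *\<^sub>R w)"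
          by (rule norm_triangle_ineq4)
        have t2: "norm (F - A u2) \<le> norm F + norm (A u2)" by (rule norm_triangle_ineq4)
        have "norm (F - A u2 - q2 *\<^sub>R w) \<le> norm F + norm (A u2) + norm (q2 *\<^sub>R w)"
          using t1 t2 by linarith
        moreover have "norm (A u2) \<le> KA * R"
        proof -
          have "norm u2 * KA \<le> R * KA" using by2 KA(1) by (intro mult_right_mono) auto
          thus ?thesis using KA(2)[rule_format, of u2] by (simp add: mult.commute)
        qed
        moreover have "norm (q2 *\<^sub>R w) \<le> R * NB"
          using by2 wb by (simp add: mult_mono)
        ultimately show ?thesis by linarith
      qed
      have du: "3 * norm (u2 - u1) \<le> norm (u1 - u0) + 2 * k * (norm F + KA * R + R * NB)"
      proof -
        have "3 * norm (u2 - u1) = norm (3 *\<^sub>R (u2 - u1))" by simp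
        also have "\<dots> \<le> norm (u1 - u0) + norm ((2 * k) *\<^sub>R (F - A u2 - q2 *\<^sub>R w))"
          unfolding u3 by (rule norm_triangle_ineq)
        also have "norm ((2 * k) *\<^sub>R (F - A u2 - q2 *\<^sub>R w)) = 2 * k * norm (F - A u2 - q2 *\<^sub>R w)"
          using k by simp
        also have "\<dots> \<le> 2 * k * (norm F + KA * R + R * NB)" using nF k by (intro mult_left_mono) auto
        finally show ?thesis by simp
      qed
      have q3: "3 * (q2 - q1) = (q1 - q0) + 2 * k * (\<gamma> - \<gamma> * q2 + inner w u2)"
      proof -
        have "(3 * q2 - 4 * q1 + q0) / (2 * k) = \<gamma> - \<gamma> * q2 + inner w u2" using e2 unfolding w_def by simp
        hence "3 * q2 - 4 * q1 + q0 = 2 * k * (\<gamma> - \<gamma> * q2 + inner w u2)" using k by (simp add: field_simps)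
        thus ?thesis by simp
      qed
      have nq: "\<bar>\<gamma> - \<gamma> * q2 + inner w u2\<bar> \<le> \<gamma> + \<gamma> * R + NB * R"
      proof -
        have "\<bar>inner w u2\<bar> \<le> norm w * norm u2" by (rule Cauchy_Schwarz_ineq2)
        also have "\<dots> \<le> NB * R" using wb by2 NB(1) by (intro mult_mono) auto
        finally have i: "\<bar>inner w u2\<bar> \<le> NB * R" .
        have "\<bar>\<gamma> * q2\<bar> \<le> \<gamma> * R" using g by2 by (simp add: abs_mult)
        thus ?thesis using i g by linarith
      qed
      have dq: "3 * \<bar>q2 - q1\<bar> \<le> \<bar>q1 - q0\<bar> + 2 * k * (\<gamma> + \<gamma> * R + NB * R)"
      proof -
        have "3 * \<bar>q2 - q1\<bar> = \<bar>3 * (q2 - q1)\<bar>" by (simp only: abs_mult abs_numeral)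
        also have "\<dots> = \<bar>(q1 - q0) + 2 * k * (\<gamma> - \<gamma> * q2 + inner w u2)\<bar>" unfolding q3 ..
        also have "\<dots> \<le> \<bar>q1 - q0\<bar> + \<bar>2 * k * (\<gamma> - \<gamma> * q2 + inner w u2)\<bar>" by (rule abs_triangle_ineq)
        also have "\<bar>2 * k * (\<gamma> - \<gamma> * q2 + inner w u2)\<bar> = 2 * k * \<bar>\<gamma> - \<gamma> * q2 + inner w u2\<bar>"
          using k by (simp add: abs_mult)
        also have "\<dots> \<le> 2 * k * (\<gamma> + \<gamma> * R + NB * R)" using nq k by (intro mult_left_mono) auto
        finally show ?thesis by simp
      qed
      have "3 * C1 * k = 2 * k * (norm F + KA * R + R * NB) + 2 * k * (\<gamma> + \<gamma> * R + NB * R)"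
        unfolding C1_def by (simp add: field_simps)
      thus "d (S y) * 3 \<le> d y + 3 * C1 * k" using du dq unfolding d_def Sy by (simp add: y)
    qed
    have bddd: "bdd_above (d ` Att)"
    proof -
      have "continuous_on Att d" unfolding d_def by (intro continuous_intros)
      hence "compact (d ` Att)" using cpt by (rule compact_continuous_image)
      thus ?thesis by (intro bounded_imp_bdd_above compact_imp_bounded)
    qed
    have db: "\<forall>x\<in>Att. d x \<le> 3 * C1 * k / (3 - 1)"
      by (rule sup_arg[OF inv ne bddd dstep]) simp
    have "norm (u1 - u2) + \<bar>q1 - q2\<bar> = d ((u1, u2), (q1, q2))"
      unfolding d_def by (simp add: norm_minus_commute abs_minus_commute)
    also have "\<dots> \<le> 3 * C1 * k / 2" using db x by simp
    also have "\<dots> \<le> C * k" using k C1 unfolding C_def by (simp add: algebra_simps)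
    finally show "norm (u1 - u2) + \<bar>q1 - q2\<bar> \<le> C * k" .
  qed
qed

end
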